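(* Let $E$ be a fixed-point equation system whose formulas may contain $\min$, with interpretation $[\![E]\!]\colon\mathbb{E}(D)\to\mathbb{E}(D)$, and let $\eta'\in\mathbb{E}(D)$. Then $\eta'\le\mu[\![E]\!]$ if there exist: (a) a fixed-point equation system $E'$ (possibly with $\min$) over the same predicate variables with $[\![E']\!]\le[\![E]\!]$; (b) $u\in\mathbb{E}(D)$ with $[\![E'^{\max}]\!](u)\le u$; (c) a function $r\colon D\to[0,\infty)$ with $[\![\mathsf{D}E'^{\max}]\!](r)+u\le r$; and (d) $\eta'\le u$ with $\eta'\le[\![E']\!](\eta')$.
   Context: $\mathbb{E}(D)$ is the set of functions $D\to[0,\infty]$ with pointwise order and operations ($\infty+x=\infty$, $0\cdot\infty=0$, $r\cdot\infty=\infty$ for $r>0$); $\mu$ denotes least fixed point. Quantitative formulas over predicate variables $X_1,\dots,X_n$ ($X_j$ of type $D_j\to\Omega$): $F ::= X_j(\tilde e)\mid t\mid F_1+F_2\mid t\cdot F\mid \mathbf{if}\ \varphi\ \mathbf{then}\ F_1\ \mathbf{else}\ F_2\mid\min\{F_1,\dots,F_m\}$, with $\tilde e$ expressions, $t$ a $[0,\infty)$-valued term, $\varphi$ boolean; interpreted by $[\![X_j(e)]\!](\eta)(v)=\eta_j([\![e]\!](v))$, $[\![t]\!](\eta)(v)=[\![t]\!](v)$, pointwise sum, scalar product and minimum, and case distinction. A fixed-point equation system $E=\{X_i(\tilde x_i)=_\mu F_i\}_{i=1}^n$ has interpretation $[\![E]\!](\eta)=([\![F_1]\!](\eta),\dots,[\![F_n]\!](\eta))$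 on $\mathbb{E}(D)$, $D=\coprod_jD_j$. $E'^{\max}$ is obtained by replacing every $\min$ in $E'$ with $\max$ (pointwise maximum). $\mathsf{D}E$ applies to each right-hand side the syntactic transformation $\mathsf{D}(X_j(\tilde e))=X_j(\tilde e)$, $\mathsf{D}t=0$, $\mathsf{D}(F_1+F_2)=\mathsf{D}F_1+\mathsf{D}F_2$, $\mathsf{D}(t\cdot F)=t\cdot\mathsf{D}F$, $\mathsf{D}$ commuting with conditionals, $\min$ and $\max$. *)

theory Defs
  imports "HOL-Library.Extended_Nonnegative_Real"
begin

text \<open>The disjoint union D of the argument domains is represented as 'v \<times> 'a:
  the component D_j is {j} \<times> UNIV.  A valuation of the parameters of an
  equation X_i(x_i) is an element of 'a.  Expressions are functions 'a \<Rightarrow> 'a,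
  terms are real-valued functions (required to be nonnegative, see nonneg_terms),
  boolean conditions are predicates on 'a.  MinF F Fs is min{F, Fs...} (nonempty);
  MaxF is the pointwise maximum, used for E'^max.\<close>

datatype ('v, 'a) qform =
    PVar 'v "'a \<Rightarrow> 'a"
  | Term "'a \<Rightarrow> real"
  | Plus "('v, 'a) qform" "('v, 'a) qform"
  | Scale "'a \<Rightarrow> real" "('v, 'a) qform"
  | Cond "'a \<Rightarrow> bool" "('v, 'a) qform" "('v, 'a) qform"
  | MinF "('v, 'a) qform" "('v, 'a) qform list"
  | MaxF "('v, 'a) qform" "('v, 'a) qform list"

fun sem :: "('v, 'a) qform \<Rightarrow> ('v \<times> 'a \<Rightarrow> ennreal) \<Rightarrow> 'a \<Rightarrow> ennreal" where
  "sem (PVar j e) \<eta> v = \<eta> (j, e v)"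
| "sem (Term t) \<eta> v = ennreal (t v)"
| "sem (Plus F G) \<eta> v = sem F \<eta> v + sem G \<eta> v"
| "sem (Scale t F) \<eta> v = ennreal (t v) * sem F \<eta> v"
| "sem (Cond \<phi> F G) \<eta> v = (if \<phi> v then sem F \<eta> v else sem G \<eta> v)"
| "sem (MinF F Fs) \<eta> v = foldl min (sem F \<eta> v) (map (\<lambda>G. sem G \<eta> v) Fs)"
| "sem (MaxF F Fs) \<eta> v = foldl max (sem F \<eta> v) (map (\<lambda>G. sem G \<eta> v) Fs)"

fun nonneg_terms :: "('v, 'a) qform \<Rightarrow> bool" where
  "nonneg_terms (PVar j e) = True"
| "nonneg_terms (Term t) = (\<forall>v. 0 \<le> t v)"
| "nonneg_terms (Plus F G) = (nonneg_terms F \<and> nonneg_terms G)"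
| "nonneg_terms (Scale t F) = ((\<forall>v. 0 \<le> t v) \<and> nonneg_terms F)"
| "nonneg_terms (Cond \<phi> F G) = (nonneg_terms F \<and> nonneg_terms G)"
| "nonneg_terms (MinF F Fs) = (nonneg_terms F \<and> (\<forall>G\<in>set Fs. nonneg_terms G))"
| "nonneg_terms (MaxF F Fs) = (nonneg_terms F \<and> (\<forall>G\<in>set Fs. nonneg_terms G))"

text \<open>Formulas of the paper's grammar (which has min but no max).\<close>
fun max_free :: "('v, 'a) qform \<Rightarrow> bool" where
  "max_free (PVar j e) = True"
| "max_free (Term t) = True"
| "max_free (Plus F G) = (max_free F \<and> max_free G)"
| "max_free (Scale t F) = max_free F"
| "max_free (Cond \<phi> F G) = (max_free F \<and> max_free G)"
| "max_free (MinF F Fs) = (max_free F \<and> (\<forall>G\<in>set Fs. max_free G))"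
| "max_free (MaxF F Fs) = False"

fun tomax :: "('v, 'a) qform \<Rightarrow> ('v, 'a) qform" where
  "tomax (PVar j e) = PVar j e"
| "tomax (Term t) = Term t"
| "tomax (Plus F G) = Plus (tomax F) (tomax G)"
| "tomax (Scale t F) = Scale t (tomax F)"
| "tomax (Cond \<phi> F G) = Cond \<phi> (tomax F) (tomax G)"
| "tomax (MinF F Fs) = MaxF (tomax F) (map tomax Fs)"
| "tomax (MaxF F Fs) = MaxF (tomax F) (map tomax Fs)"

fun Dform :: "('v, 'a) qform \<Rightarrow> ('v, 'a) qform" where
  "Dform (PVar j e) = PVar j e"
| "Dform (Term t) = Term (\<lambda>_. 0)"
| "Dform (Plus F G) = Plus (Dform F) (Dform G)"
| "Dform (Scale t F) = Scale t (Dform F)"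
| "Dform (Cond \<phi> F G) = Cond \<phi> (Dform F) (Dform G)"
| "Dform (MinF F Fs) = MinF (Dform F) (map Dform Fs)"
| "Dform (MaxF F Fs) = MaxF (Dform F) (map Dform Fs)"

text \<open>Equation systems {X_i(x_i) =_mu F_i}: the right-hand side of each variable.\<close>
type_synonym ('v, 'a) eqsys = "'v \<Rightarrow> ('v, 'a) qform"

definition sem_sys :: "('v, 'a) eqsys \<Rightarrow> ('v \<times> 'a \<Rightarrow> ennreal) \<Rightarrow> ('v \<times> 'a \<Rightarrow> ennreal)" where
  "sem_sys E \<eta> = (\<lambda>(i, v). sem (E i) \<eta> v)"

definition max_sys :: "('v, 'a) eqsys \<Rightarrow> ('v, 'a) eqsys" where
  "max_sys E = (\<lambda>i. tomax (E i))"

definition D_sys :: "('v, 'a) eqsys \<Rightarrow> ('v, 'a) eqsys" where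
  "D_sys E = (\<lambda>i. Dform (E i))"

end

theory Submission
  imports Defs
begin

lemma bound_step:
  fixes a' a m f' f g c :: ennreal
  assumes "a' \<le> a + c * m" "f' \<le> f + c * g"
  shows "a' \<le> a + c * max m g" "f' \<le> f + c * max m g"
proof -
  have "c * m \<le> c * max m g" by (rule mult_left_mono) simp_all
  hence "a + c * m \<le> a + c * max m g" by (rule add_left_mono)
  thus "a' \<le> a + c * max m g" using assms(1) by (rule order.trans[rotated])
  have "c * g \<le> c * max m g" by (rule mult_left_mono) simp_all
  hence "f + c * g \<le> f + c * max m g" by (rule add_left_mono)
  thus "f' \<le> f + c * max m g" using assms(2) by (rule order.trans[rotated])
qed

lemma min_step:
  fixes a' a b' b K :: ennreal
  assumes "a' \<le> a + K" "b' \<le> b + K"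
  shows "min a' b' \<le> min a b + K"
proof (cases "a \<le> b")
  case True
  hence "min a b = a" by (rule min.absorb1)
  moreover have "min a' b' \<le> a + K" by (rule order.trans[OF min.cobounded1 assms(1)])
  ultimately show ?thesis by simp
next
  case False
  hence "min a b = b" by simp
  moreover have "min a' b' \<le> b + K" by (rule order.trans[OF min.cobounded2 assms(2)])
  ultimately show ?thesis by simp
qed

lemma max_step:
  fixes a' a b' b K :: ennreal
  assumes "a' \<le> a + K" "b' \<le> b + K"
  shows "max a' b' \<le> max a b + K"
proof -
  have "a + K \<le> max a b + K" by (rule add_right_mono) simp
  hence 1: "a' \<le> max a b + K" by (rule order.trans[OF assms(1)])
  have "b + K \<le> max a b + K" by (rule add_right_mono) simp
  hence 2: "b' \<le> max a b + K" by (rule order.trans[OF assms(2)])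
  show ?thesis using 1 2 by (rule max.boundedI)
qed

lemma fold_min_bound:
  fixes f' f g :: "'b \<Rightarrow> ennreal"
  assumes "a' \<le> a + c * m" "\<forall>G\<in>set Gs. f' G \<le> f G + c * g G"
  shows "foldl min a' (map f' Gs) \<le> foldl min a (map f Gs) + c * foldl max m (map g Gs)"
  using assms
proof (induction Gs arbitrary: a' a m)
  case Nil thus ?case by simp
next
  case (Cons G Gs)
  have "f' G \<le> f G + c * g G" using Cons.prems(2) by simp
  note bs = bound_step[OF Cons.prems(1) this]
  have "min a' (f' G) \<le> min a (f G) + c * max m (g G)" by (rule min_step[OF bs])
  moreover have "\<forall>G\<in>set Gs. f' G \<le> f G + c * g G" using Cons.prems(2) by simp
  ultimately show ?case using Cons.IH by simp
qed

lemma fold_max_bound: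
  fixes f' f g :: "'b \<Rightarrow> ennreal"
  assumes "a' \<le> a + c * m" "\<forall>G\<in>set Gs. f' G \<le> f G + c * g G"
  shows "foldl max a' (map f' Gs) \<le> foldl max a (map f Gs) + c * foldl max m (map g Gs)"
  using assms
proof (induction Gs arbitrary: a' a m)
  case Nil thus ?case by simp
next
  case (Cons G Gs)
  have "f' G \<le> f G + c * g G" using Cons.prems(2) by simp
  note bs = bound_step[OF Cons.prems(1) this]
  have "max a' (f' G) \<le> max a (f G) + c * max m (g G)" by (rule max_step[OF bs])
  moreover have "\<forall>G\<in>set Gs. f' G \<le> f G + c * g G" using Cons.prems(2) by simp
  ultimately show ?case using Cons.IH by simp
qed

lemma key:
  fixes a b d :: "'v \<times> 'a \<Rightarrow> ennreal"
  assumes "\<forall>x. b x \<le> a x + c * d x"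
  shows "sem F b v \<le> sem F a v + c * sem (Dform (tomax F)) d v"
  using assms
proof (induction F arbitrary: v)
  case (PVar j e) thus ?case by simp
next
  case (Term t) thus ?case by simp
next
  case (Plus F G)
  have "sem F b v + sem G b v \<le> (sem F a v + c * sem (Dform (tomax F)) d v) + (sem G a v + c * sem (Dform (tomax G)) d v)"
    using Plus by (intro add_mono) auto
  thus ?case by (simp add: algebra_simps)
next
  case (Scale t F)
  have "ennreal (t v) * sem F b v \<le> ennreal (t v) * (sem F a v + c * sem (Dform (tomax F)) d v)"
    using Scale by (intro mult_left_mono) auto
  thus ?case by (simp add: algebra_simps)
next
  case (Cond \<phi> F G) thus ?case by simp
next
  case (MinF F Fs)
  show ?case using fold_min_bound[of "sem F b v" "sem F a v" c "sem (Dform (tomax F)) d v" Fs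
      "\<lambda>G. sem G b v" "\<lambda>G. sem G a v" "\<lambda>G. sem (Dform (tomax G)) d v"] MinF
    by (simp add: o_def)
next
  case (MaxF F Fs)
  show ?case using fold_max_bound[of "sem F b v" "sem F a v" c "sem (Dform (tomax F)) d v" Fs
      "\<lambda>G. sem G b v" "\<lambda>G. sem G a v" "\<lambda>G. sem (Dform (tomax G)) d v"] MaxF
    by (simp add: o_def)
qed

lemma sem_mono:
  assumes "a \<le> b" shows "sem F a v \<le> sem F b v"
proof -
  have "\<forall>x. a x \<le> b x + 0 * a x" using assms by (simp add: le_fun_def)
  from key[OF this, of F v] show ?thesis by simp
qed

lemma sem_sys_mono: "mono (sem_sys E)"
proof (rule monoI)
  fix a b :: "'a \<times> 'b \<Rightarrow> ennreal" assume "a \<le> b"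
  show "sem_sys E a \<le> sem_sys E b"
    unfolding le_fun_def sem_sys_def
  proof
    fix x :: "'a \<times> 'b" show "(case x of (i, v) \<Rightarrow> sem (E i) a v) \<le> (case x of (i, v) \<Rightarrow> sem (E i) b v)"
      using sem_mono[OF \<open>a \<le> b\<close>] by (cases x) simp
  qed
qed

lemma step_pt:
  fixes N L U R D :: ennreal and k :: nat
  assumes "N \<le> L + ennreal (1 / (real k + 1)) * D" "N \<le> U" "D + U \<le> R" "R < \<infinity>"
  shows "N \<le> L + ennreal (1 / (real k + 2)) * R"
proof (cases "L = \<infinity>")
  case True thus ?thesis by simp
next
  case False
  have "U \<le> D + U" by (rule add_increasing[OF zero_le order_refl])
  hence U: "U < \<infinity>" using assms(3,4) by (meson order.trans le_less_trans)
  have "D \<le> D + U" by (rule add_increasing2[OF zero_le order_refl])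
  hence D: "D < \<infinity>" using assms(3,4) by (meson order.trans le_less_trans)
  have N: "N < \<infinity>" using U assms(2) by (meson le_less_trans)
  obtain l where l: "L = ennreal l" "0 \<le> l" using False by (cases L) auto
  obtain u where u: "U = ennreal u" "0 \<le> u" using U by (cases U) auto
  obtain d where d: "D = ennreal d" "0 \<le> d" using D by (cases D) auto
  obtain n where n: "N = ennreal n" "0 \<le> n" using N by (cases N) auto
  obtain r where r: "R = ennreal r" "0 \<le> r" using assms(4) by (cases R) auto
  have h1: "n \<le> l + d / (real k + 1)"
    using assms(1) l d n by (simp add: ennreal_mult'[symmetric] ennreal_plus[symmetric] del: ennreal_plus)
  have h2: "n \<le> u" using assms(2) u n by simp
  have h3: "d + u \<le> r" using assms(3) u d r by (simp add: ennreal_plus[symmetric] del: ennreal_plus)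
  have "(n - l) * (real k + 1) \<le> d" using h1 by (simp add: field_simps)
  hence "(n - l) * (real k + 2) \<le> r" using h2 h3 l(2) by (simp add: algebra_simps)
  hence "n \<le> l + r / (real k + 2)" by (simp add: field_simps)
  thus ?thesis using l n r
    by (simp add: ennreal_mult'[symmetric] ennreal_plus[symmetric] del: ennreal_plus)
qed

lemma final_pt:
  fixes N L R :: ennreal
  assumes "\<forall>k::nat. N \<le> L + ennreal (1 / (real k + 1)) * R" "R < \<infinity>"
  shows "N \<le> L"
proof (cases "L = \<infinity>")
  case True thus ?thesis by simp
next
  case False
  obtain l where l: "L = ennreal l" "0 \<le> l" using False by (cases L) auto
  obtain r where r: "R = ennreal r" "0 \<le> r" using assms(2) by (cases R) auto
  have N0: "N \<le> ennreal (l + r)" using assms(1)[rule_format, of 0] l r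
    by (simp add: ennreal_plus[symmetric] del: ennreal_plus)
  hence N: "N < \<infinity>" using ennreal_less_top[of "l + r"] by (simp add: le_less_trans)
  obtain n where n: "N = ennreal n" "0 \<le> n" using N by (cases N) auto
  have h: "n \<le> l + r / (real k + 1)" for k
    using assms(1)[rule_format, of k] l n r
    by (simp add: ennreal_mult'[symmetric] ennreal_plus[symmetric] del: ennreal_plus)
  have "n \<le> l"
  proof (rule ccontr)
    assume "\<not> n \<le> l"
    hence pos: "n - l > 0" by simp
    obtain k :: nat where k: "r / (n - l) < real k" using reals_Archimedean2 by blast
    hence "r < (n - l) * real k" using pos by (simp add: field_simps)
    hence "r < (n - l) * (real k + 1)" using pos by (smt (verit) mult_le_cancel_left)
    hence "r / (real k + 1) < n - l" by (simp add: field_simps)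
    thus False using h[of k] by simp
  qed
  thus ?thesis using l n by simp
qed

theorem corollaryE5:
  fixes E E' :: "('v::finite, 'a) eqsys"
    and \<eta>' u r :: "'v \<times> 'a \<Rightarrow> ennreal"
  assumes E_wf: "\<forall>i. nonneg_terms (E i) \<and> max_free (E i)"
    and E'_wf: "\<forall>i. nonneg_terms (E' i) \<and> max_free (E' i)"
    and a: "sem_sys E' \<le> sem_sys E"
    and b: "sem_sys (max_sys E') u \<le> u"
    and c_fin: "\<forall>x. r x < \<infinity>"
    and c: "\<forall>x. sem_sys (D_sys (max_sys E')) r x + u x \<le> r x"
    and d1: "\<eta>' \<le> u"
    and d2: "\<eta>' \<le> sem_sys E' \<eta>'"
  shows "\<eta>' \<le> lfp (sem_sys E)"
proof -
  define L where "L = lfp (sem_sys E)"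
  have L: "sem_sys E L \<le> L" 
  proof -
    have "sem_sys E L = L" unfolding L_def by (rule lfp_unfold[OF sem_sys_mono, symmetric])
    thus ?thesis by simp
  qed
  have inv: "\<forall>x. \<eta>' x \<le> L x + ennreal (1 / (real k + 1)) * r x" for k
  proof (induction k)
    case 0
    have "\<eta>' x \<le> L x + r x" for x
    proof -
      have "\<eta>' x \<le> u x" using le_funD[OF d1] .
      also have "\<dots> \<le> r x" using c[rule_format, of x] add_increasing[OF zero_le order_refl, of "u x"] by (meson order.trans)
      also have "\<dots> \<le> L x + r x" by simp
      finally show ?thesis .
    qed
    thus ?case by simp
  next
    case (Suc k)
    show ?case
    proof
      fix x :: "'v \<times> 'a"
      obtain i v where x: "x = (i, v)" by fastforce
      have s1: "\<eta>' x \<le> sem (E' i) \<eta>' v" using le_funD[OF d2, of x] x by (simp add: sem_sys_def)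
      have s2: "sem (E' i) \<eta>' v \<le> sem (E' i) L v + ennreal (1 / (real k + 1)) * sem (Dform (tomax (E' i))) r v"
        by (rule key) (rule Suc)
      have s3: "sem (E' i) L v \<le> sem (E i) L v"
        using le_funD[OF le_funD[OF a, of L], of x] x by (simp add: sem_sys_def)
      have s4: "sem (E i) L v \<le> L x"
        using le_funD[OF L, of x] x by (simp add: sem_sys_def)
      have 1: "\<eta>' x \<le> L x + ennreal (1 / (real k + 1)) * sem (Dform (tomax (E' i))) r v"
        using s1 s2 s3 s4 by (meson add_right_mono order_trans)
      have 2: "sem (Dform (tomax (E' i))) r v + u x \<le> r x"
        using c[rule_format, of x] x by (simp add: sem_sys_def D_sys_def max_sys_def)
      have 3: "\<eta>' x \<le> u x" using le_funD[OF d1] .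
      from step_pt[OF 1 3 2 c_fin[rule_format]] show "\<eta>' x \<le> L x + ennreal (1 / (real (Suc k) + 1)) * r x"
        by (simp add: add.commute)
    qed
  qed
  have "\<eta>' x \<le> L x" for x
    using final_pt[of "\<eta>' x" "L x" "r x"] inv c_fin by blast
  thus ?thesis unfolding L_def le_fun_def by blast
qed

end
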